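(* Let $r\le N$, let $\mathbf{S}\in\mathbb{R}^{N\times N}$ be skew-symmetric, and let $\mathbf{B}\in\mathbb{R}^{N\times r}$ have all singular values $\sigma_1(\mathbf{B}),\dots,\sigma_r(\mathbf{B})$ in $[0,1]$. Let $[\mathbf{S}]=\mathbf{B}^\top\mathbf{S}\mathbf{B}$ and $\mathbf{Y}=\mathbf{I}_N+\mathbf{B}\big(\exp([\mathbf{S}])-\mathbf{I}_r\big)\mathbf{B}^\top$. Then $$\|\mathbf{Y}^\top\mathbf{Y}-\mathbf{I}_N\|_2\le\big(e^{\|\mathbf{S}\|_2}-1\big)^2\max_i\big|\sigma_i(\mathbf{B})^2(\sigma_i(\mathbf{B})^2-1)\big|\le\tfrac14\big(e^{\|\mathbf{S}\|_2}-1\big)^2.$$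
   Context: $\|\cdot\|_2$ denotes the spectral norm and $\exp$ the matrix exponential. (In the paper $\mathbf{B}$ is the output of Newton–Schulz iterations $\mathbf{M}_{k+1}=\frac12\mathbf{M}_k(3\mathbf{I}-\mathbf{M}_k^\top\mathbf{M}_k)$ started from a matrix normalised by its Frobenius norm plus $\epsilon>0$, which guarantees singular values in $[0,1]$.) *)

theory Defs
  imports "HOL-Analysis.Analysis"
begin

primrec matpow :: "real^'n^'n \<Rightarrow> nat \<Rightarrow> real^'n^'n" where
  "matpow A 0 = mat 1"
| "matpow A (Suc k) = A ** matpow A k"

definition mat_exp :: "real^'n^'n \<Rightarrow> real^'n^'n" where
  "mat_exp A = (\<Sum>k. (1 / fact k) *\<^sub>R matpow A k)"

definition spec_norm :: "real^'n^'m \<Rightarrow> real" where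
  "spec_norm A = onorm (\<lambda>x. A *v x)"

definition singular_values :: "real^'r^'n \<Rightarrow> real set" where
  "singular_values B =
     sqrt ` {\<mu>. \<exists>v. v \<noteq> 0 \<and> (transpose B ** B) *v v = \<mu> *\<^sub>R v}"

end

theory Submission
  imports Defs
begin

lemma mm_add_rdistrib: "((A::real^'n^'m) + B) ** (C::real^'p^'n) = A ** C + B ** C"
  by (vector matrix_matrix_mult_def sum.distrib[symmetric] field_simps)
lemma mm_diff_rdistrib: "((A::real^'n^'m) - B) ** (C::real^'p^'n) = A ** C - B ** C"
  by (vector matrix_matrix_mult_def sum_subtractf[symmetric] field_simps)
lemma mm_diff_ldistrib: "(A::real^'n^'m) ** ((B::real^'p^'n) - C) = A ** B - A ** C"
  by (vector matrix_matrix_mult_def sum_subtractf[symmetric] field_simps)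
lemma transpose_add': "transpose ((A::real^'n^'m) + B) = transpose A + transpose B"
  by (vector transpose_def)
lemma transpose_diff': "transpose ((A::real^'n^'m) - B) = transpose A - transpose B"
  by (vector transpose_def)
lemma transpose_uminus': "transpose (- (A::real^'n^'m)) = - transpose A"
  by (vector transpose_def)

lemma onorm_mm: "onorm ((*v) ((A::real^'n^'m) ** (B::real^'p^'n))) \<le> onorm ((*v) A) * onorm ((*v) B)"
proof -
  have "(*v) (A ** B) = (*v) A \<circ> (*v) B" by (auto simp: matrix_vector_mul_assoc)
  thus ?thesis using onorm_compose[of "(*v) A" "(*v) B"] by simp
qed

lemma mat1_ne0: "(mat 1 :: real^'n^'n) \<noteq> 0"
  by (simp add: vec_eq_iff mat_def)

typedef ('n::finite) sqm = "UNIV :: (real^'n^'n) set" morphisms Rm Am by simp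

lemma Rm_Am[simp]: "Rm (Am x) = x" by (simp add: Am_inverse)
lemma Rm_inj: "Rm x = Rm y \<longleftrightarrow> x = y" by (simp add: Rm_inject)

instantiation sqm :: (finite) real_normed_algebra_1
begin
definition "0 = Am 0"
definition "1 = Am (mat 1)"
definition "x + y = Am (Rm x + Rm y)"
definition "x - y = Am (Rm x - Rm y)"
definition "- x = Am (- Rm x)"
definition "x * y = Am (Rm x ** Rm y)"
definition "r *\<^sub>R x = Am (r *\<^sub>R Rm x)"
definition "norm x = onorm (\<lambda>v. Rm x *v v)"
definition dist_sqm :: "'a sqm \<Rightarrow> 'a sqm \<Rightarrow> real" where "dist_sqm a b = norm (a - b)"
definition sgn_sqm :: "'a sqm \<Rightarrow> 'a sqm" where "sgn_sqm x = scaleR (inverse (norm x)) x"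
definition uniformity_sqm :: "('a sqm \<times> 'a sqm) filter" where
  "uniformity_sqm = (INF e\<in>{0 <..}. principal {(x, y). dist x y < e})"
definition open_sqm :: "'a sqm set \<Rightarrow> bool"
  where "open_sqm S = (\<forall>x\<in>S. \<forall>\<^sub>F (x', y) in uniformity. x' = x \<longrightarrow> y \<in> S)"
instance
  apply standard
  apply (simp_all only: dist_sqm_def open_sqm_def sgn_sqm_def uniformity_sqm_def)
  apply (simp_all add: zero_sqm_def one_sqm_def plus_sqm_def minus_sqm_def uminus_sqm_def times_sqm_def scaleR_sqm_def norm_sqm_def Rm_inject[symmetric] matrix_mul_assoc matrix_add_ldistrib algebra_simps
     mm_add_rdistrib scalar_matrix_assoc matrix_scalar_ac mat1_ne0 onorm_mm onorm_eq_0 matrix_eq onorm_triangle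
     onorm_id)
  subgoal by (rule exI[where x="axis undefined 1"]) (simp add: vec_eq_iff axis_def)
  subgoal for a x 
    using onorm_scaleR[of "(*v) (Rm x)" a] by (simp add: scaleR_matrix_vector_assoc)
  done
end

lemma Rm_0[simp]: "Rm 0 = 0" and Rm_1[simp]: "Rm 1 = mat 1" 
  and Rm_add[simp]: "Rm (x + y) = Rm x + Rm y" and Rm_diff[simp]: "Rm (x - y) = Rm x - Rm y"
  and Rm_uminus[simp]: "Rm (- x) = - Rm x" and Rm_mult[simp]: "Rm (x * y) = Rm x ** Rm y"
  and Rm_scaleR[simp]: "Rm (r *\<^sub>R x) = r *\<^sub>R Rm x"
  by (simp_all add: zero_sqm_def one_sqm_def plus_sqm_def minus_sqm_def uminus_sqm_def times_sqm_def scaleR_sqm_def)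

lemma norm_sqm_spec: "norm x = spec_norm (Rm x)"
  by (simp add: norm_sqm_def spec_norm_def)


lemma onorm_le_frob: "onorm ((*v) (A::real^'n^'m)) \<le> real CARD('m) * real CARD('n) * norm A"
  apply (rule onorm_le_matrix_component)
  subgoal for i j using component_le_norm_cart[where x="A$i" and i=j] Finite_Cartesian_Product.norm_nth_le[of A i] by linarith
  done

lemma frob_le_onorm: "norm (A::real^'n^'m) \<le> real CARD('m) * real CARD('n) * onorm ((*v) A)"
proof -
  have "norm A \<le> (\<Sum>i\<in>UNIV. norm (A$i))" by (simp add: norm_vec_def L2_set_le_sum)
  also have "\<dots> \<le> (\<Sum>i\<in>(UNIV::'m set). real CARD('n) * onorm ((*v) A))"
  proof (rule sum_mono)
    fix i
    have "norm (A$i) \<le> (\<Sum>j\<in>UNIV. \<bar>A$i$j\<bar>)" by (rule norm_le_l1_cart)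
    also have "\<dots> \<le> (\<Sum>j\<in>(UNIV::'n set). onorm ((*v) A))"
      by (rule sum_mono) (rule matrix_component_le_onorm)
    finally show "norm (A$i) \<le> real CARD('n) * onorm ((*v) A)" by simp
  qed
  finally show ?thesis by simp
qed

lemma bl_Rm: "bounded_linear (Rm :: 'n::finite sqm \<Rightarrow> _)"
proof (rule bounded_linear_intro[where K="real CARD('n) * real CARD('n)"])
  show "norm (Rm x) \<le> norm x * (real CARD('n) * real CARD('n))" for x :: "'n sqm"
    using frob_le_onorm[of "Rm x"] by (simp add: norm_sqm_def mult.commute)
qed simp_all

lemma Am_add: "Am (x + y) = Am x + Am y" and Am_scaleR: "Am (r *\<^sub>R x) = r *\<^sub>R Am x"
  by (simp_all add: Rm_inj[symmetric])

lemma bl_Am: "bounded_linear (Am :: _ \<Rightarrow> 'n::finite sqm)"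
proof (rule bounded_linear_intro[where K="real CARD('n) * real CARD('n)"])
  show "norm (Am x :: 'n sqm) \<le> norm x * (real CARD('n) * real CARD('n))" for x 
    using onorm_le_frob[of x] by (simp add: norm_sqm_def mult.commute)
qed (simp_all add: Am_add Am_scaleR)

instance sqm :: (finite) banach
proof
  fix X :: "nat \<Rightarrow> 'a sqm"
  assume "Cauchy X"
  hence "Cauchy (\<lambda>n. Rm (X n))" by (rule bounded_linear.Cauchy[OF bl_Rm])
  then obtain L where "(\<lambda>n. Rm (X n)) \<longlonglongrightarrow> L" using Cauchy_convergent_iff convergent_def by blast
  hence "(\<lambda>n. Am (Rm (X n))) \<longlonglongrightarrow> Am L" by (rule bounded_linear.tendsto[OF bl_Am])
  thus "convergent X" by (auto simp: convergent_def Rm_inverse)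
qed


definition phi :: "'a::{real_normed_algebra_1,banach} \<Rightarrow> 'a" where
  "phi x = (\<Sum>k. x^k /\<^sub>R fact (Suc k))"

lemma summable_phi_real: "summable (\<lambda>k. (r::real)^k /\<^sub>R fact (Suc k))"
proof (rule summable_comparison_test')
  show "summable (\<lambda>k. \<bar>r\<bar>^k /\<^sub>R fact k)" by (rule summable_exp_generic)
  fix n :: nat
  have "fact n \<le> (fact (Suc n) :: real)" by (rule fact_mono) simp
  hence "\<bar>r\<bar>^n / fact (Suc n) \<le> \<bar>r\<bar>^n / fact n"
    by (intro divide_left_mono) auto
  moreover have "norm (r^n /\<^sub>R fact (Suc n)) = \<bar>r\<bar>^n / fact (Suc n)"
    unfolding norm_scaleR real_norm_def by (simp add: power_abs divide_inverse mult.commute abs_mult del: fact_Suc)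
  moreover have "\<bar>r\<bar>^n /\<^sub>R fact n = \<bar>r\<bar>^n / fact n"
    by (simp add: divide_inverse mult.commute)
  ultimately show "norm (r^n /\<^sub>R fact (Suc n)) \<le> \<bar>r\<bar>^n /\<^sub>R fact n"
    by simp
qed

lemma summable_phi: "summable (\<lambda>k. (x::'a::{real_normed_algebra_1,banach})^k /\<^sub>R fact (Suc k))"
proof (rule summable_comparison_test')
  show "summable (\<lambda>k. (norm x)^k /\<^sub>R fact (Suc k))" by (rule summable_phi_real)
  fix n :: nat
  show "norm (x^n /\<^sub>R fact (Suc n)) \<le> (norm x)^n /\<^sub>R fact (Suc n)"
    using norm_power_ineq[of x n] by (simp add: divide_right_mono divide_inverse_commute)
qed

lemma exp_phi: "exp (x::'a::{real_normed_algebra_1,banach}) = 1 + x * phi x"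
proof -
  have "(\<lambda>n. x^n /\<^sub>R fact n) sums exp x" by (rule exp_converges)
  hence "(\<lambda>n. x^(Suc n) /\<^sub>R fact (Suc n)) sums (exp x - 1)"
    by (subst sums_Suc_iff) simp
  moreover have "(\<lambda>n. x * (x^n /\<^sub>R fact (Suc n))) sums (x * phi x)"
    unfolding phi_def by (rule sums_mult[OF summable_phi[THEN summable_sums]])
  moreover have "(\<lambda>n. x * (x^n /\<^sub>R fact (Suc n))) = (\<lambda>n. x^(Suc n) /\<^sub>R fact (Suc n))"
    by (simp add: mult_scaleR_right)
  ultimately have "x * phi x = exp x - 1" using sums_unique2 by metis
  thus ?thesis by simp
qed

lemma norm_phi: "norm (phi (x::'a::{real_normed_algebra_1,banach})) \<le> phi (norm x)"
  unfolding phi_def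
proof (rule norm_suminf_le)
  show "summable (\<lambda>k. (norm x)^k /\<^sub>R fact (Suc k))" by (rule summable_phi_real)
  fix n :: nat
  show "norm (x^n /\<^sub>R fact (Suc n)) \<le> (norm x)^n /\<^sub>R fact (Suc n)"
    using norm_power_ineq[of x n] by (simp add: divide_right_mono divide_inverse_commute)
qed

lemma phi_mono: "0 \<le> (a::real) \<Longrightarrow> a \<le> b \<Longrightarrow> phi a \<le> phi b"
  unfolding phi_def
  by (intro suminf_le summable_phi_real) (auto intro!: divide_right_mono power_mono)

lemma Rm_power: "Rm (x ^ k) = matpow (Rm x) k"
  by (induction k) simp_all

lemma exp_sums_mat: "(\<lambda>k. (1 / fact k) *\<^sub>R matpow A k) sums Rm (exp (Am A))"
proof -
  have "(\<lambda>n. Rm ((Am A)^n /\<^sub>R fact n)) sums Rm (exp (Am A))"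
    by (rule bounded_linear.sums[OF bl_Rm exp_converges])
  thus ?thesis by (simp add: Rm_power divide_inverse_commute)
qed

lemma mat_exp_Rm: "mat_exp A = Rm (exp (Am A))"
  unfolding mat_exp_def using exp_sums_mat sums_unique by metis

lemma matpow_commute: "matpow A k ** A = A ** matpow A k"
  by (induction k) (simp_all, metis matrix_mul_assoc)

lemma matpow_transpose: "matpow (transpose A) k = transpose (matpow A k)"
  by (induction k) (simp_all add: matrix_transpose_mul, metis matpow_commute matrix_transpose_mul)

lemma bl_transpose: "bounded_linear (transpose :: real^'n^'m \<Rightarrow> _)"
  by (rule linear_conv_bounded_linear[THEN iffD1], rule linearI)
     (simp_all add: transpose_add' transpose_scalar)

lemma mat_exp_transpose: "mat_exp (transpose A) = transpose (mat_exp A)"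
proof -
  have "(\<lambda>k. transpose ((1 / fact k) *\<^sub>R matpow A k)) sums transpose (mat_exp A)"
    unfolding mat_exp_def
    by (rule bounded_linear.sums[OF bl_transpose], rule summable_sums, rule sums_summable[OF exp_sums_mat])
  hence "(\<lambda>k. (1 / fact k) *\<^sub>R matpow (transpose A) k) sums transpose (mat_exp A)"
    by (simp add: transpose_scalar matpow_transpose)
  thus ?thesis unfolding mat_exp_def by (rule sums_unique[symmetric])
qed

lemma mat_exp_orth:
  assumes "transpose K = - K"
  shows "transpose (mat_exp K) ** mat_exp K = mat 1"
proof -
  have "Am (- K) = - Am K" by (simp add: Rm_inj[symmetric])
  have "transpose (mat_exp K) = mat_exp (- K)" using mat_exp_transpose[of K] assms by simp
  also have "\<dots> = Rm (exp (- Am K))" by (simp add: mat_exp_Rm \<open>Am (- K) = - Am K\<close>)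
  finally have "transpose (mat_exp K) ** mat_exp K = Rm (exp (- Am K) * exp (Am K))"
    by (simp add: mat_exp_Rm)
  also have "exp (- Am K) * exp (Am K) = 1" using exp_minus_inverse[of "- Am K"] by simp
  finally show ?thesis by simp
qed


lemma sym_inner: "transpose X = X \<Longrightarrow> inner (X *v a) b = inner a (X *v (b::real^'n))"
  by (metis dot_lmul_matrix transpose_matrix_vector)

lemma quad_helper:
  fixes a b :: real
  assumes "\<And>t. 0 \<le> 2*t*a + t^2*b" "0 \<le> b" "0 \<le> a"
  shows "a = 0"
proof -
  define t where "t = - a / (b + 1)"
  have h: "t * (b + 1) = - a" using assms by (simp add: t_def)
  have "0 \<le> 2*t*a + t^2*b" by (rule assms(1))
  hence "0 \<le> (2*t*a + t^2*b) * (b+1)" using assms by simp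
  also have "(2*t*a + t^2*b) * (b+1) = 2*a*(t*(b+1)) + t*b*(t*(b+1))"
    by (simp add: algebra_simps power2_eq_square)
  also have "\<dots> = -2*a^2 - t*b*a" using h by (simp add: power2_eq_square)
  finally have 1: "0 \<le> -2*a^2 - t*b*a" .
  have "- t*b*a = a^2 * (b/(b+1))" using assms by (simp add: t_def power2_eq_square field_simps)
  also have "a^2 * (b/(b+1)) \<le> a^2 * 1" using assms by (intro mult_left_mono) auto
  finally have "- t*b*a \<le> a^2" by simp
  with 1 have "a^2 \<le> 0" by linarith
  thus ?thesis by simp
qed

lemma eig_in_subspace:
  fixes X :: "real^'n^'n"
  assumes sym: "transpose X = X" and V: "subspace V" and ne: "\<exists>v\<in>V. v \<noteq> 0"
    and inv: "\<And>v. v \<in> V \<Longrightarrow> X *v v \<in> V"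
  shows "\<exists>u l. u \<in> V \<and> u \<noteq> 0 \<and> X *v u = l *\<^sub>R u \<and> (\<forall>y\<in>V. inner y (X *v y) \<le> l * inner y y)"
proof -
  define f where "f y = inner y (X *v y)" for y
  define T where "T = sphere 0 1 \<inter> V"
  have "compact T" unfolding T_def by (intro compact_Int_closed compact_sphere closed_subspace V)
  obtain v where v: "v \<in> V" "v \<noteq> 0" using ne by blast
  have "inverse (norm v) *\<^sub>R v \<in> T" unfolding T_def using v V by (simp add: subspace_scale)
  hence "T \<noteq> {}" by blast
  have "continuous_on T f" unfolding f_def by (intro continuous_intros)
  obtain u where u: "u \<in> T" and umax: "\<And>y. y \<in> T \<Longrightarrow> f y \<le> f u"
    using continuous_attains_sup[OF \<open>compact T\<close> \<open>T \<noteq> {}\<close> \<open>continuous_on T f\<close>] by blast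
  define l where "l = f u"
  have uV: "u \<in> V" and nu: "norm u = 1" using u by (auto simp: T_def)
  have uu: "inner u u = 1" using nu by (simp add: power2_norm_eq_inner[symmetric]) 
  have bound: "f y \<le> l * inner y y" if "y \<in> V" for y
  proof (cases "y = 0")
    case True thus ?thesis by (simp add: f_def)
  next
    case False
    define c where "c = inverse (norm y)"
    have "c *\<^sub>R y \<in> T" unfolding T_def c_def using that False V by (simp add: subspace_scale)
    hence "f (c *\<^sub>R y) \<le> l" using umax l_def by blast
    hence "c^2 * f y \<le> l" by (simp add: f_def matrix_vector_mult_scaleR power2_eq_square mult.assoc)
    hence "c^2 * f y * (norm y)^2 \<le> l * (norm y)^2" by (simp add: mult_right_mono)
    moreover have "c^2 * (norm y)^2 = 1" using False by (simp add: c_def field_simps)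
    ultimately have "f y \<le> l * (norm y)^2" by (metis mult.commute mult.left_commute mult_1)
    thus ?thesis by (simp add: power2_norm_eq_inner)
  qed
  define w where "w = l *\<^sub>R u - X *v u"
  have wV: "w \<in> V" unfolding w_def using V uV inv by (simp add: subspace_diff subspace_scale)
  have sy: "inner u (X *v w) = inner w (X *v u)"
    using sym_inner[OF sym, of u w] by (simp add: inner_commute)
  have ww: "inner w w = l * inner u w - inner w (X *v u)"
  proof -
    have "inner w w = inner w (l *\<^sub>R u - X *v u)" by (simp only: w_def[symmetric])
    also have "\<dots> = l * inner w u - inner w (X *v u)" by (simp add: inner_diff_right)
    finally show ?thesis by (simp add: inner_commute)
  qed
  have fu: "f u = l" by (simp add: l_def)
  have q: "0 \<le> 2*t*inner w w + t^2 * (l * inner w w - f w)" for t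
  proof -
    have "u + t *\<^sub>R w \<in> V" using uV wV V by (simp add: subspace_add subspace_scale)
    hence "0 \<le> l * inner (u + t *\<^sub>R w) (u + t *\<^sub>R w) - f (u + t *\<^sub>R w)" using bound by simp
    also have "l * inner (u + t *\<^sub>R w) (u + t *\<^sub>R w) - f (u + t *\<^sub>R w) = 2*t*(l * inner u w - inner w (X *v u)) + t^2 * (l * inner w w - f w)"
      using sy fu uu unfolding f_def
      by (simp add: inner_add_left inner_add_right matrix_vector_right_distrib matrix_vector_mult_scaleR
          algebra_simps power2_eq_square inner_commute)
    also have "\<dots> = 2*t*inner w w + t^2 * (l * inner w w - f w)" using ww by simp
    finally show ?thesis .
  qed
  have "0 \<le> l * inner w w - f w" using bound[OF wV] by simp
  hence "inner w w = 0" using quad_helper[of "inner w w" "l * inner w w - f w"] q by simp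
  hence "X *v u = l *\<^sub>R u" by (simp add: w_def)
  moreover have "u \<noteq> 0" using nu by auto
  ultimately show ?thesis using uV bound unfolding f_def by blast
qed


lemma mm_uminus_left: "(- (A::real^'n^'m)) ** (B::real^'p^'n) = - (A ** B)"
  by (vector matrix_matrix_mult_def sum_negf[symmetric])
lemma mm_uminus_right: "(A::real^'n^'m) ** (- (B::real^'p^'n)) = - (A ** B)"
  by (vector matrix_matrix_mult_def sum_negf[symmetric])

lemma tr_inner: "inner (transpose A *v x) y = inner x ((A::real^'n^'m) *v y)"
  by (simp add: dot_lmul_matrix)

lemma sn_nonneg: "0 \<le> spec_norm (A::real^'n^'m)"
  unfolding spec_norm_def by (rule onorm_pos_le) simp

lemma sn_apply: "norm ((A::real^'n^'m) *v x) \<le> spec_norm A * norm x"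
  unfolding spec_norm_def by (rule onorm) simp

lemma sn_le: "(\<And>x. norm ((A::real^'n^'m) *v x) \<le> c * norm x) \<Longrightarrow> spec_norm A \<le> c"
  unfolding spec_norm_def by (rule onorm_le)

lemma sn_mult_le:
  assumes "spec_norm (A::real^'n^'m) \<le> a" "spec_norm (B::real^'p^'n) \<le> b"
  shows "spec_norm (A ** B) \<le> a * b"
proof -
  have "spec_norm (A ** B) \<le> spec_norm A * spec_norm B"
    using onorm_mm[of A B] by (simp add: spec_norm_def)
  also have "\<dots> \<le> a * b" using assms sn_nonneg[of A] sn_nonneg[of B]
    by (intro mult_mono) auto
  finally show ?thesis .
qed

lemma sn_transpose: "spec_norm (transpose (A::real^'n^'m)) \<le> spec_norm A"
proof (rule sn_le)
  fix x
  define y where "y = transpose A *v x"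
  have "(norm y)^2 = inner x (A *v y)" unfolding power2_norm_eq_inner using tr_inner[of A x y] by (simp only: y_def)
  also have "\<dots> \<le> norm x * norm (A *v y)" by (rule norm_cauchy_schwarz)
  also have "\<dots> \<le> norm x * (spec_norm A * norm y)" by (intro mult_left_mono sn_apply) simp
  finally have *: "norm y * norm y \<le> (spec_norm A * norm x) * norm y" by (simp add: power2_eq_square algebra_simps)
  show "norm (transpose A *v x) \<le> spec_norm A * norm x"
  proof (cases "norm y = 0")
    case True thus ?thesis using sn_nonneg[of A] by (simp add: y_def)
  next
    case False thus ?thesis using * by (simp add: y_def)
  qed
qed


theorem theorem3:
  fixes S :: "real^'n^'n" and B :: "real^'r^'n"
  assumes "CARD('r) \<le> CARD('n)"
    and "transpose S = - S"
    and "\<forall>\<sigma>\<in>singular_values B. 0 \<le> \<sigma> \<and> \<sigma> \<le> 1"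
  defines "Y \<equiv> mat 1 + B ** (mat_exp (transpose B ** S ** B) - mat 1) ** transpose B"
  shows "spec_norm (transpose Y ** Y - mat 1)
           \<le> (exp (spec_norm S) - 1)^2 *
             Max {\<bar>\<sigma>^2 * (\<sigma>^2 - 1)\<bar> | \<sigma>. \<sigma> \<in> singular_values B}
         \<and> (exp (spec_norm S) - 1)^2 *
             Max {\<bar>\<sigma>^2 * (\<sigma>^2 - 1)\<bar> | \<sigma>. \<sigma> \<in> singular_values B}
           \<le> (1/4) * (exp (spec_norm S) - 1)^2"
proof -
  define G where "G = transpose B ** B"
  define H where "H = B ** transpose B"
  define E where "E = {\<mu>. \<exists>v. v \<noteq> 0 \<and> G *v v = \<mu> *\<^sub>R v}"
  have SV: "singular_values B = sqrt ` E" by (simp add: singular_values_def E_def G_def)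
  have Gsym: "transpose G = G" by (simp add: G_def matrix_transpose_mul)
  have Hsym: "transpose H = H" by (simp add: H_def matrix_transpose_mul)
  have quadG: "inner y (G *v y) = (norm (B *v y))^2" for y
    using tr_inner[of B "B *v y" y]
    by (simp add: G_def matrix_vector_mul_assoc[symmetric] power2_norm_eq_inner inner_commute)
  have quadH: "inner x (H *v x) = (norm (transpose B *v x))^2" for x
    using tr_inner[of "transpose B" "transpose B *v x" x]
    by (simp add: H_def matrix_vector_mul_assoc[symmetric] power2_norm_eq_inner inner_commute)
  have E_nonneg: "0 \<le> \<mu>" if muE: "\<mu> \<in> E" for \<mu>
  proof -
    obtain v where v: "v \<noteq> 0" "G *v v = \<mu> *\<^sub>R v" using muE by (auto simp: E_def)
    have "\<mu> * inner v v = (norm (B *v v))^2" using quadG[of v] v by simp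
    moreover have "inner v v > 0" using v by simp
    ultimately show ?thesis by (metis zero_le_power2 zero_le_mult_iff not_le)
  qed
  have E_le1: "\<mu> \<le> 1" if "\<mu> \<in> E" for \<mu>
  proof -
    have "sqrt \<mu> \<le> 1" using assms(3) that SV by auto
    thus ?thesis by simp
  qed
  have finE: "finite E"
  proof -
    define f where "f \<mu> = (SOME v. v \<noteq> 0 \<and> G *v v = \<mu> *\<^sub>R v)" for \<mu>
    have f: "f \<mu> \<noteq> 0 \<and> G *v f \<mu> = \<mu> *\<^sub>R f \<mu>" if muE: "\<mu> \<in> E" for \<mu>
    proof -
      have "\<exists>v. v \<noteq> 0 \<and> G *v v = \<mu> *\<^sub>R v" using muE by (simp add: E_def)
      thus ?thesis unfolding f_def by (rule someI_ex)
    qed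
    have orth: "inner (f \<mu>) (f \<nu>) = 0" if "\<mu> \<in> E" "\<nu> \<in> E" "\<mu> \<noteq> \<nu>" for \<mu> \<nu>
    proof -
      have "\<mu> * inner (f \<mu>) (f \<nu>) = inner (G *v f \<mu>) (f \<nu>)" using f[OF that(1)] by simp
      also have "\<dots> = inner (f \<mu>) (G *v f \<nu>)" by (rule sym_inner[OF Gsym])
      also have "\<dots> = \<nu> * inner (f \<mu>) (f \<nu>)" using f[OF that(2)] by simp
      finally show ?thesis using that(3) by simp
    qed
    have inj: "inj_on f E"
    proof (rule inj_onI)
      fix \<mu> \<nu> assume "\<mu> \<in> E" "\<nu> \<in> E" "f \<mu> = f \<nu>"
      show "\<mu> = \<nu>"
      proof (rule ccontr)
        assume "\<mu> \<noteq> \<nu>"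
        hence "inner (f \<mu>) (f \<mu>) = 0" using orth[OF \<open>\<mu> \<in> E\<close> \<open>\<nu> \<in> E\<close>] \<open>f \<mu> = f \<nu>\<close> by simp
        thus False using f[OF \<open>\<mu> \<in> E\<close>] by simp
      qed
    qed
    have "pairwise orthogonal (f ` E)"
      unfolding pairwise_def orthogonal_def
    proof (intro ballI impI)
      fix x y assume "x \<in> f ` E" "y \<in> f ` E" "x \<noteq> y"
      then obtain \<mu> \<nu> where "\<mu> \<in> E" "\<nu> \<in> E" "x = f \<mu>" "y = f \<nu>" by blast
      with \<open>x \<noteq> y\<close> show "inner x y = 0" using orth by blast
    qed
    moreover have "0 \<notin> f ` E" using f by (metis imageE)
    ultimately have "independent (f ` E)" by (rule pairwise_orthogonal_independent)
    hence "finite (f ` E)" using independent_bound by blast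
    thus ?thesis using finite_imageD inj by blast
  qed
  obtain u1 l1 where u1: "u1 \<noteq> 0" "G *v u1 = l1 *\<^sub>R u1" and l1b: "\<And>y. inner y (G *v y) \<le> l1 * inner y y"
  proof -
    have "\<exists>v\<in>(UNIV::(real^'r) set). v \<noteq> 0"
      by (rule bexI[where x="axis undefined 1"]) (simp_all add: vec_eq_iff axis_def)
    from eig_in_subspace[OF Gsym subspace_UNIV this] show ?thesis using that by blast
  qed
  have l1E: "l1 \<in> E" unfolding E_def using u1 by blast
  have Bx: "norm (B *v y) \<le> norm y" for y
  proof -
    have "(norm (B *v y))^2 = inner y (G *v y)" by (simp only: quadG)
    also have "\<dots> \<le> l1 * inner y y" by (rule l1b)
    also have "\<dots> \<le> 1 * inner y y" by (intro mult_right_mono E_le1[OF l1E]) simp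
    also have "\<dots> = (norm y)^2" by (simp add: power2_norm_eq_inner)
    finally show ?thesis by (rule power2_le_imp_le) simp
  qed
  have snB: "spec_norm B \<le> 1" by (rule sn_le) (simp add: Bx)
  have snBt: "spec_norm (transpose B) \<le> 1" using sn_transpose[of B] snB by simp
  define M where "M = Max {\<bar>\<sigma>^2 * (\<sigma>^2 - 1)\<bar> | \<sigma>. \<sigma> \<in> singular_values B}"
  have Mset: "{\<bar>\<sigma>^2 * (\<sigma>^2 - 1)\<bar> | \<sigma>. \<sigma> \<in> singular_values B} = (\<lambda>\<mu>. \<bar>\<mu> * (\<mu> - 1)\<bar>) ` E"
    using E_nonneg by (force simp: SV)
  have M_eq: "M = Max ((\<lambda>\<mu>. \<bar>\<mu> * (\<mu> - 1)\<bar>) ` E)" by (simp add: M_def Mset)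
  have M_ge: "\<bar>\<mu> * (\<mu> - 1)\<bar> \<le> M" if "\<mu> \<in> E" for \<mu>
    unfolding M_eq using finE that by (intro Max_ge) auto
  have M_nonneg: "0 \<le> M" using M_ge[OF l1E] by linarith
  have M_le: "M \<le> 1/4"
    unfolding M_eq
  proof (subst Max_le_iff)
    show "finite ((\<lambda>\<mu>. \<bar>\<mu> * (\<mu> - 1)\<bar>) ` E)" using finE by simp
    show "(\<lambda>\<mu>. \<bar>\<mu> * (\<mu> - 1)\<bar>) ` E \<noteq> {}" using l1E by auto
    show "\<forall>a\<in>(\<lambda>\<mu>. \<bar>\<mu> * (\<mu> - 1)\<bar>) ` E. a \<le> 1/4"
    proof
      fix a assume "a \<in> (\<lambda>\<mu>. \<bar>\<mu> * (\<mu> - 1)\<bar>) ` E"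
      then obtain \<mu> where mu: "\<mu> \<in> E" "a = \<bar>\<mu> * (\<mu> - 1)\<bar>" by blast
      have h0: "0 \<le> \<mu>" and h1: "\<mu> \<le> 1" using E_nonneg E_le1 mu by auto
      have "\<mu> * \<mu> \<le> \<mu>" using h0 h1 by (simp add: mult_left_le)
      hence "a = \<mu> - \<mu> * \<mu>" using mu by (simp add: abs_if algebra_simps)
      moreover have "0 \<le> (\<mu> - 1/2) * (\<mu> - 1/2)" by simp
      ultimately show "a \<le> 1/4" by (simp add: algebra_simps)
    qed
  qed
  define W where "W = H ** H - H"
  have HW: "H ** W = W ** H"
    by (simp add: W_def mm_diff_ldistrib mm_diff_rdistrib matrix_mul_assoc)
  have Wsym: "transpose W = W"
    by (simp add: W_def transpose_diff' matrix_transpose_mul Hsym)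
  define W2 where "W2 = W ** W"
  have W2sym: "transpose W2 = W2" by (simp add: W2_def matrix_transpose_mul Wsym)
  have HW2: "H ** W2 = W2 ** H" unfolding W2_def by (metis matrix_mul_assoc HW)
  have Wbound: "norm (W *v x) \<le> M * norm x" for x
  proof -
    have ex0: "\<exists>v\<in>(UNIV::(real^'n) set). v \<noteq> 0"
      by (rule bexI[where x="axis undefined 1"]) (simp_all add: vec_eq_iff axis_def)
    obtain u0 mu where u0: "u0 \<noteq> 0" "W2 *v u0 = mu *\<^sub>R u0"
      and mub: "\<And>y. inner y (W2 *v y) \<le> mu * inner y y"
    proof -
      from eig_in_subspace[OF W2sym subspace_UNIV ex0] show ?thesis using that by blast
    qed
    define V where "V = {x. W2 *v x = mu *\<^sub>R x}"
    have subV: "subspace V"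
      unfolding subspace_def V_def
      by (simp add: matrix_vector_right_distrib matrix_vector_mult_scaleR scaleR_add_right)
    have neV: "\<exists>v\<in>V. v \<noteq> 0" using u0 by (auto simp: V_def)
    have invV: "H *v v \<in> V" if vV: "v \<in> V" for v
    proof -
      have "W2 *v (H *v v) = H *v (W2 *v v)" by (simp add: matrix_vector_mul_assoc HW2)
      also have "\<dots> = mu *\<^sub>R (H *v v)" using vV by (simp add: V_def matrix_vector_mult_scaleR)
      finally show ?thesis by (simp add: V_def)
    qed
    obtain u lam where u: "u \<in> V" "u \<noteq> 0" "H *v u = lam *\<^sub>R u"
    proof -
      from eig_in_subspace[OF Hsym subV neV invV] show ?thesis using that by blast
    qed
    have Wu: "W *v u = (lam * lam - lam) *\<^sub>R u"
      using u(3) by (simp add: W_def matrix_vector_mult_diff_rdistrib matrix_vector_mul_assoc[symmetric]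
          matrix_vector_mult_scaleR scaleR_diff_left)
    have "W2 *v u = (lam * lam - lam) *\<^sub>R (lam * lam - lam) *\<^sub>R u"
      using Wu by (simp add: W2_def matrix_vector_mul_assoc[symmetric] matrix_vector_mult_scaleR)
    moreover have "W2 *v u = mu *\<^sub>R u" using u(1) by (simp add: V_def)
    ultimately have "mu *\<^sub>R u = ((lam * lam - lam) * (lam * lam - lam)) *\<^sub>R u" by simp
    hence mu_eq: "mu = (lam * lam - lam) * (lam * lam - lam)" using u(2) by simp
    have lam_nonneg: "0 \<le> lam"
    proof -
      have "lam * inner u u = (norm (transpose B *v u))^2" using quadH[of u] u(3) by simp
      moreover have "inner u u > 0" using u(2) by simp
      ultimately show ?thesis by (metis zero_le_power2 zero_le_mult_iff not_le)
    qed
    have lamM: "\<bar>lam * lam - lam\<bar> \<le> M"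
    proof (cases "lam = 0")
      case True thus ?thesis using M_nonneg by simp
    next
      case False
      define v where "v = transpose B *v u"
      have Bv: "B *v v = lam *\<^sub>R u" using u(3) unfolding v_def H_def by (simp only: matrix_vector_mul_assoc)
      hence "v \<noteq> 0" using False u(2) by auto
      moreover have "G *v v = lam *\<^sub>R v"
        using Bv by (simp add: G_def v_def matrix_vector_mul_assoc[symmetric] matrix_vector_mult_scaleR)
      ultimately have "lam \<in> E" unfolding E_def by blast
      from M_ge[OF this] show ?thesis by (simp add: algebra_simps)
    qed
    have "(norm (W *v x))^2 = inner x (W2 *v x)"
      using sym_inner[OF Wsym, of x "W *v x"]
      by (simp add: power2_norm_eq_inner W2_def matrix_vector_mul_assoc[symmetric])
    also have "\<dots> \<le> mu * inner x x" by (rule mub)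
    also have "\<dots> = \<bar>lam * lam - lam\<bar>^2 * (norm x)^2" by (simp only: mu_eq power2_norm_eq_inner power2_abs) (simp add: power2_eq_square)
    also have "\<dots> \<le> M^2 * (norm x)^2" using lamM by (intro mult_right_mono power_mono) auto
    also have "\<dots> = (M * norm x)^2" by (simp add: power_mult_distrib)
    finally show ?thesis by (rule power2_le_imp_le) (simp add: M_nonneg)
  qed
  have snW: "spec_norm W \<le> M" by (rule sn_le) (rule Wbound)
  define s where "s = spec_norm S"
  define K where "K = transpose B ** S ** B"
  have Ksk: "transpose K = - K"
    by (simp add: K_def matrix_transpose_mul assms(2) mm_uminus_left mm_uminus_right matrix_mul_assoc)
  define P where "P = Rm (phi (Am K))"
  define C where "C = K ** P"
  have expK: "mat_exp K = mat 1 + C" by (simp add: mat_exp_Rm exp_phi C_def P_def)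
  have orth: "transpose (mat 1 + C) ** (mat 1 + C) = mat 1" using mat_exp_orth[OF Ksk] expK by simp
  have eq: "mat 1 + C + transpose C + transpose C ** C = mat 1"
  proof -
    have "transpose (mat 1 + C) ** (mat 1 + C) = mat 1 + C + transpose C + transpose C ** C"
      by (simp add: transpose_add' matrix_add_ldistrib mm_add_rdistrib algebra_simps)
    with orth show ?thesis by simp
  qed
  have CtC: "transpose C ** C = - (transpose C + C)"
  proof -
    have "transpose C ** C = (mat 1 + C + transpose C + transpose C ** C) - mat 1 - C - transpose C" by simp
    also have "\<dots> = mat 1 - mat 1 - C - transpose C" by (subst eq) (rule refl)
    finally show ?thesis by simp
  qed
  have Ydef: "Y = mat 1 + B ** C ** transpose B"
    unfolding Y_def K_def[symmetric] expK by simp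
  have tY: "transpose Y = mat 1 + B ** transpose C ** transpose B"
    by (simp add: Ydef transpose_add' matrix_transpose_mul matrix_mul_assoc)
  have rl: "X ** transpose C ** C = - (X ** transpose C) - X ** C" for X :: "real^'r^'n"
  proof -
    have "X ** transpose C ** C = X ** (transpose C ** C)" by (simp add: matrix_mul_assoc)
    also have "\<dots> = X ** (- (transpose C + C))" by (simp add: CtC)
    also have "\<dots> = - (X ** transpose C) - X ** C" by (simp add: mm_uminus_right mm_diff_ldistrib)
    finally show ?thesis .
  qed
  have ident: "transpose Y ** Y - mat 1 = B ** transpose C ** (G - mat 1) ** C ** transpose B"
    unfolding tY by (simp add: Ydef G_def matrix_add_ldistrib mm_add_rdistrib mm_diff_ldistrib mm_diff_rdistrib
        matrix_mul_assoc rl mm_uminus_left algebra_simps)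
  define Z where "Z = B ** transpose P ** transpose B ** transpose S"
  have ident2: "B ** transpose C ** (G - mat 1) ** C ** transpose B = Z ** W ** transpose Z"
    by (simp add: Z_def W_def H_def G_def C_def K_def matrix_transpose_mul mm_diff_ldistrib mm_diff_rdistrib
        matrix_mul_assoc)
  have snS: "spec_norm S \<le> s" by (simp add: s_def)
  have snSt: "spec_norm (transpose S) \<le> s" using sn_transpose[of S] by (simp add: s_def)
  have snK: "spec_norm K \<le> 1 * s * 1" unfolding K_def by (intro sn_mult_le snBt snB snS)
  have snP: "spec_norm P \<le> phi s"
  proof -
    have "spec_norm P = norm (phi (Am K))" by (simp add: P_def norm_sqm_spec)
    also have "\<dots> \<le> phi (norm (Am K))" by (rule norm_phi)
    also have "\<dots> \<le> phi s" using snK by (intro phi_mono) (simp_all add: norm_sqm_spec sn_nonneg)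
    finally show ?thesis .
  qed
  have snPt: "spec_norm (transpose P) \<le> phi s" using sn_transpose[of P] snP by simp
  have sphi: "phi s * s = exp s - 1" using exp_phi[of s] by simp
  have snZ: "spec_norm Z \<le> exp s - 1"
  proof -
    have "spec_norm Z \<le> 1 * phi s * 1 * s" unfolding Z_def by (intro sn_mult_le snB snPt snBt snSt)
    thus ?thesis using sphi by simp
  qed
  have snZt: "spec_norm (transpose Z) \<le> exp s - 1" using sn_transpose[of Z] snZ by simp
  have main: "spec_norm (Z ** W ** transpose Z) \<le> (exp s - 1) * M * (exp s - 1)"
    by (intro sn_mult_le snZ snW snZt)
  have c1: "spec_norm (transpose Y ** Y - mat 1) \<le> (exp s - 1)^2 * M"
    using main unfolding ident ident2 by (simp add: power2_eq_square algebra_simps)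
  have c2: "(exp s - 1)^2 * M \<le> (1/4) * (exp s - 1)^2"
  proof -
    have "(exp s - 1)^2 * M \<le> (exp s - 1)^2 * (1/4)" by (rule mult_left_mono[OF M_le]) simp
    thus ?thesis by (simp only: mult.commute)
  qed
  show ?thesis using c1 c2 unfolding M_def s_def by simp
qed

end
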